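(* Let $\Delta$ be a simplicial polytopal fan in $\mathbb{R}^d$ with ray generators $\mathbf{v}_1,\ldots,\mathbf{v}_n$, let $\mathbf{u}^{(1)},\ldots,\mathbf{u}^{(m)}\in\mathbb{R}^d$, $U=(\mathbf{u}^{(1)},\ldots,\mathbf{u}^{(m)})^\mathsf{T}$, let $\mathbf{h}_0\in\mathcal{P}(\Delta)$, $\mathbf{y}_0=A_U\mathbf{h}_0$, and $\mathbf{y}\in\mathbb{R}^m$. Let $\hat{\mathbf{y}}$ be the unique point of $A_U\mathcal{P}(\Delta)$ with minimal distance to $\mathbf{y}$, and $\bar{\mathbf{y}}$ the orthogonal projection of $\mathbf{y}$ onto the subspace $A_U\mathbb{R}^n$. Let $\bar{\mathbf{h}},\hat{\mathbf{h}}\in\mathbb{R}^n$ satisfy $A_U\bar{\mathbf{h}}=\bar{\mathbf{y}}$ and $A_U\hat{\mathbf{h}}=\hat{\mathbf{y}}$. Then \[ \|\hat{\mathbf{y}}-\mathbf{y}_0\|\le\|\bar{\mathbf{y}}-\mathbf{y}_0\|, \qquad \sqrt{\lambda_1(A_U^\mathsf{T}A_U)}\,\|\hat{\mathbf{h}}-\mathbf{h}_0\|\le\sqrt{\lambda_n(A_U^\mathsf{T}A_U)}\,\|\bar{\mathbf{h}}-\mathbf{h}_0\|. \]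
   Context: A fan is simplicial if every cone is generated by linearly independent vectors; polytopal if it is the normal fan of a polytope. The deformation cone $\mathcal{P}(\Delta)\subseteq\mathbb{R}^n$ is the closed polyhedral cone of support vectors $(h_P(\mathbf{v}_i))_i$ of polytopes $P$ whose normal fan is coarsened by $\Delta$, where $h_P(\mathbf{u})=\max_{\mathbf{x}\in P}\langle\mathbf{x},\mathbf{u}\rangle$. For $\mathbf{u}\in\mathbb{R}^d$, with $\sigma$ the cone of $\Delta$ containing $\mathbf{u}$ in its relative interior and $\mathbf{u}=\sum_{k\in I_\sigma}\lambda_k\mathbf{v}_k$ over the generators of $\sigma$, set $[\mathbf{u}]_i=\lambda_i$ for $i\in I_\sigma$ and $0$ otherwise; $A_U$ is the $m\times n$ matrix with rows $[\mathbf{u}^{(i)}]^\mathsf{T}$. For a symmetric matrix $A\in\mathbb{R}^{n\times n}$, $\lambda_1(A)\le\cdots\le\lambda_n(A)$ are its eigenvalues. *)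

theory Defs
  imports "HOL-Analysis.Analysis"
begin

definition support_fun :: "(real^'d) set \<Rightarrow> real^'d \<Rightarrow> real" where
  "support_fun P u = Sup ((\<lambda>x. inner x u) ` P)"

definition normal_cone :: "(real^'d) set \<Rightarrow> (real^'d) set \<Rightarrow> (real^'d) set" where
  "normal_cone P F = {u. \<forall>x\<in>P. \<forall>y\<in>F. inner x u \<le> inner y u}"

definition normal_fan :: "(real^'d) set \<Rightarrow> (real^'d) set set" where
  "normal_fan P = {normal_cone P F | F. F face_of P \<and> F \<noteq> {}}"

definition polytopal_fan :: "(real^'d) set set \<Rightarrow> bool" where
  "polytopal_fan \<Delta> \<longleftrightarrow> (\<exists>Q. polytope Q \<and> \<Delta> = normal_fan Q)"

definition cone_gen :: "('n \<Rightarrow> real^'d) \<Rightarrow> 'n set \<Rightarrow> (real^'d) set" where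
  "cone_gen v I = {(\<Sum>i\<in>I. c i *\<^sub>R v i) | c. \<forall>i\<in>I. c i \<ge> 0}"

definition gens :: "('n \<Rightarrow> real^'d) \<Rightarrow> (real^'d) set \<Rightarrow> 'n set" where
  "gens v \<sigma> = {i. v i \<in> \<sigma>}"

definition simplicial_fan_with_rays :: "(real^'d) set set \<Rightarrow> ('n::finite \<Rightarrow> real^'d) \<Rightarrow> bool" where
  "simplicial_fan_with_rays \<Delta> v \<longleftrightarrow>
     (\<forall>i. v i \<noteq> 0 \<and> cone_gen v {i} \<in> \<Delta>) \<and>
     (\<forall>i j. cone_gen v {i} = cone_gen v {j} \<longrightarrow> i = j) \<and>
     (\<forall>\<sigma>\<in>\<Delta>. aff_dim \<sigma> = 1 \<longrightarrow> (\<exists>i. \<sigma> = cone_gen v {i})) \<and>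
     (\<forall>\<sigma>\<in>\<Delta>. \<sigma> = cone_gen v (gens v \<sigma>) \<and> independent (v ` gens v \<sigma>))"

definition deformation_cone :: "(real^'d) set set \<Rightarrow> ('n::finite \<Rightarrow> real^'d) \<Rightarrow> (real^'n) set" where
  "deformation_cone \<Delta> v =
     {(\<chi> i. support_fun P (v i)) | P. polytope P \<and> P \<noteq> {} \<and>
        (\<forall>\<sigma>\<in>\<Delta>. \<exists>\<tau>\<in>normal_fan P. \<sigma> \<subseteq> \<tau>)}"

definition bracket :: "(real^'d) set set \<Rightarrow> ('n::finite \<Rightarrow> real^'d) \<Rightarrow> real^'d \<Rightarrow> real^'n" where
  "bracket \<Delta> v u = (THE lam. \<exists>\<sigma>\<in>\<Delta>. u \<in> rel_interior \<sigma> \<and>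
       (\<forall>i. i \<notin> gens v \<sigma> \<longrightarrow> lam $ i = 0) \<and>
       u = (\<Sum>i\<in>gens v \<sigma>. (lam $ i) *\<^sub>R v i))"

definition A_mat :: "(real^'d) set set \<Rightarrow> ('n::finite \<Rightarrow> real^'d) \<Rightarrow> real^'d^'m \<Rightarrow> real^'n^'m" where
  "A_mat \<Delta> v U = (\<chi> k. bracket \<Delta> v (U $ k))"

text \<open>(Real) eigenvalues of a square matrix; for symmetric matrices these are all eigenvalues.\<close>
definition eigenvalues :: "real^'n^'n \<Rightarrow> real set" where
  "eigenvalues M = {c. \<exists>x. x \<noteq> 0 \<and> M *v x = c *\<^sub>R x}"

definition lambda_min :: "real^'n^'n \<Rightarrow> real" where
  "lambda_min M = Min (eigenvalues M)"

definition lambda_max :: "real^'n^'n \<Rightarrow> real" where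
  "lambda_max M = Max (eigenvalues M)"

end

theory Submission
  imports Defs
begin


lemma MtA_inner:
  fixes A :: "real^'n^'m"
  shows "inner ((transpose A ** A) *v x) y = inner (A *v x) (A *v y)"
proof -
  have "(transpose A ** A) *v x = (A *v x) v* A"
    by (simp flip: matrix_vector_mul_assoc)
  then show ?thesis by (simp add: dot_lmul_matrix)
qed

lemma eig_finite:
  fixes A :: "real^'n^'m"
  shows "finite (eigenvalues (transpose A ** A))"
proof -
  let ?M = "transpose A ** A"
  define e where "e c = (SOME x. x \<noteq> 0 \<and> ?M *v x = c *\<^sub>R x)" for c
  have e: "e c \<noteq> 0 \<and> ?M *v e c = c *\<^sub>R e c" if "c \<in> eigenvalues ?M" for c
  proof -
    have "\<exists>x. x \<noteq> 0 \<and> ?M *v x = c *\<^sub>R x" using that by (simp add: eigenvalues_def)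
    then show ?thesis unfolding e_def by (rule someI_ex)
  qed
  have inj: "inj_on e (eigenvalues ?M)"
  proof (rule inj_onI)
    fix c d assume c: "c \<in> eigenvalues ?M" and d: "d \<in> eigenvalues ?M" and ed: "e c = e d"
    have "c *\<^sub>R e c = d *\<^sub>R e c" using e[OF c] e[OF d] ed by metis
    then show "c = d" using e[OF c] by simp
  qed
  have orth: "pairwise orthogonal (e ` eigenvalues ?M)"
  proof (clarsimp simp: pairwise_def orthogonal_def)
    fix c d assume c: "c \<in> eigenvalues ?M" and d: "d \<in> eigenvalues ?M" and ne: "e c \<noteq> e d"
    then have cd: "c \<noteq> d" by auto
    have "c * inner (e c) (e d) = inner (?M *v e c) (e d)" using e[OF c] by simp
    also have "\<dots> = inner (A *v e c) (A *v e d)" by (rule MtA_inner)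
    also have "\<dots> = inner (?M *v e d) (e c)" by (metis MtA_inner inner_commute)
    also have "\<dots> = d * inner (e c) (e d)" using e[OF d] by (simp add: inner_commute)
    finally show "inner (e c) (e d) = 0" using cd by simp
  qed
  have "0 \<notin> e ` eigenvalues ?M" using e by auto
  then have "independent (e ` eigenvalues ?M)" using orth pairwise_orthogonal_independent by blast
  then have "finite (e ` eigenvalues ?M)" using independent_bound by blast
  then show ?thesis using inj finite_imageD by blast
qed

lemma quad_zero:
  fixes a b :: real
  assumes "\<And>t. a * t + b * t\<^sup>2 \<le> 0"
  shows "a = 0"
proof (rule ccontr)
  assume a: "a \<noteq> 0"
  define t where "t = a / (\<bar>b\<bar> + 1)"
  have pos: "\<bar>b\<bar> + 1 > 0" by simp
  have 1: "b * t\<^sup>2 \<ge> - \<bar>b\<bar> * t\<^sup>2"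
    by (intro mult_right_mono) auto
  have B: "a - \<bar>b\<bar> * t = a / (\<bar>b\<bar> + 1)"
    using pos by (simp add: t_def field_simps)
  have "a * t - \<bar>b\<bar> * t\<^sup>2 = t * (a - \<bar>b\<bar> * t)" by (simp add: power2_eq_square algebra_simps)
  also have "\<dots> = t * t" using B by (simp add: t_def)
  finally have 2: "a * t - \<bar>b\<bar> * t\<^sup>2 = t * t" .
  have "t \<noteq> 0" using a pos by (simp add: t_def)
  then have 3: "t * t > 0" by (metis not_real_square_gt_zero)
  from 1 2 3 have "a * t + b * t\<^sup>2 > 0" by linarith
  then show False using assms[of t] by linarith
qed

lemma poly_aux:
  fixes s c t p q w n rr :: real
  assumes "s * (c + 2 * t * p + t\<^sup>2 * q) \<le> s * c * (1 + 2 * t * w + t\<^sup>2 * n)" and "rr = p - c * w"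
  shows "s * (2 * rr) * t + s * (q - c * n) * t\<^sup>2 \<le> 0"
proof -
  have p: "p = rr + c * w" using assms(2) by simp
  show ?thesis using assms(1) unfolding p by (simp add: algebra_simps)
qed

lemma lagrange:
  fixes A :: "real^'n^'m"
  assumes s: "s \<noteq> 0" and x: "norm x = 1" and mx: "\<And>z. s * (norm (A *v z))\<^sup>2 \<le> s * (norm (A *v x))\<^sup>2 * (norm z)\<^sup>2"
  shows "(transpose A ** A) *v x = (norm (A *v x))\<^sup>2 *\<^sub>R x"
proof -
  let ?M = "transpose A ** A"
  let ?c = "(norm (A *v x))\<^sup>2"
  define r where "r = ?M *v x - ?c *\<^sub>R x"
  have "s * (2 * inner r r) * t + s * ((norm (A *v r))\<^sup>2 - ?c * (norm r)\<^sup>2) * t\<^sup>2 \<le> 0" for t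
  proof -
    have m1: "s * (norm (A *v (x + t *\<^sub>R r)))\<^sup>2 \<le> s * ?c * (norm (x + t *\<^sub>R r))\<^sup>2" using mx by simp
    have e1: "(norm (A *v (x + t *\<^sub>R r)))\<^sup>2 = ?c + 2 * t * inner (?M *v x) r + t\<^sup>2 * (norm (A *v r))\<^sup>2"
      unfolding power2_norm_eq_inner MtA_inner
      by (simp add: matrix_vector_right_distrib matrix_vector_mult_scaleR
          inner_add_left inner_add_right inner_commute algebra_simps power2_eq_square)
    have xx: "inner x x = 1" using x by (metis power2_norm_eq_inner power_one) 
    have e2: "(norm (x + t *\<^sub>R r))\<^sup>2 = 1 + 2 * t * inner x r + t\<^sup>2 * (norm r)\<^sup>2"
      using xx unfolding power2_norm_eq_inner
      by (simp add: inner_add_left inner_add_right inner_commute algebra_simps power2_eq_square)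
    have e3: "inner r r = inner (?M *v x) r - ?c * inner x r" by (simp add: r_def inner_diff_left)
    show ?thesis using m1 unfolding e1 e2 by (rule poly_aux) (rule e3)
  qed
  from quad_zero[OF this] have "s * inner r r = 0" by simp
  then have "r = 0" using s by simp
  then show ?thesis by (simp add: r_def)
qed

lemma scale_bound:
  fixes A :: "real^'n^'m"
  assumes "\<And>y. norm y = 1 \<Longrightarrow> s * (norm (A *v y))\<^sup>2 \<le> s * c"
  shows "s * (norm (A *v z))\<^sup>2 \<le> s * c * (norm z)\<^sup>2"
proof (cases "z = 0")
  case True then show ?thesis by simp
next
  case False
  define y where "y = (1 / norm z) *\<^sub>R z"
  have ny: "norm y = 1" using False by (simp add: y_def)
  have z: "z = norm z *\<^sub>R y" using False by (simp add: y_def)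
  have "(norm (A *v z))\<^sup>2 = (norm z)\<^sup>2 * (norm (A *v y))\<^sup>2"
    by (subst z) (simp add: matrix_vector_mult_scaleR power_mult_distrib)
  moreover have "(norm z)\<^sup>2 * (s * (norm (A *v y))\<^sup>2) \<le> (norm z)\<^sup>2 * (s * c)"
    using assms[OF ny] by (rule mult_left_mono) auto
  ultimately show ?thesis by (simp add: algebra_simps)
qed

lemma extremal_eig:
  fixes A :: "real^'n^'m"
  assumes s: "s \<noteq> 0"
  shows "\<exists>c\<in>eigenvalues (transpose A ** A). \<forall>z. s * (norm (A *v z))\<^sup>2 \<le> s * c * (norm z)\<^sup>2"
proof -
  let ?f = "\<lambda>z::real^'n. s * (norm (A *v z))\<^sup>2"
  have "continuous_on (sphere 0 1) (\<lambda>z. A *v z)"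
    by (intro linear_continuous_on linear_conv_bounded_linear[THEN iffD1] matrix_vector_mul_linear)
  then have cont: "continuous_on (sphere 0 1) ?f"
    by (intro continuous_intros)
  obtain x where x: "x \<in> sphere 0 1" and mx: "\<forall>y\<in>sphere 0 1. ?f y \<le> ?f x"
    using continuous_attains_sup[OF compact_sphere _ cont] by auto
  have nx: "norm x = 1" using x by simp
  have b: "s * (norm (A *v z))\<^sup>2 \<le> s * (norm (A *v x))\<^sup>2 * (norm z)\<^sup>2" for z
    by (rule scale_bound) (use mx in auto)
  have "(transpose A ** A) *v x = (norm (A *v x))\<^sup>2 *\<^sub>R x"
    by (rule lagrange[OF s nx b])
  moreover have "x \<noteq> 0" using nx by auto
  ultimately have "(norm (A *v x))\<^sup>2 \<in> eigenvalues (transpose A ** A)"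
    unfolding eigenvalues_def by blast
  then show ?thesis using b by blast
qed

lemma rayleigh:
  fixes A :: "real^'n^'m"
  shows "sqrt (lambda_min (transpose A ** A)) * norm x \<le> norm (A *v x)"
    and "norm (A *v x) \<le> sqrt (lambda_max (transpose A ** A)) * norm x"
proof -
  let ?M = "transpose A ** A"
  have fin: "finite (eigenvalues ?M)" by (rule eig_finite)
  obtain c1 where c1: "c1 \<in> eigenvalues ?M" and b1: "\<And>z. 1 * (norm (A *v z))\<^sup>2 \<le> 1 * c1 * (norm z)\<^sup>2"
    using extremal_eig[of 1 A] by auto
  obtain c2 where c2: "c2 \<in> eigenvalues ?M" and b2: "\<And>z. -1 * (norm (A *v z))\<^sup>2 \<le> -1 * c2 * (norm z)\<^sup>2"
    using extremal_eig[of "-1" A] by auto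
  have lmax: "c1 \<le> lambda_max ?M" unfolding lambda_max_def using fin c1 by simp
  have lmin: "lambda_min ?M \<le> c2" unfolding lambda_min_def using fin c2 by simp
  have "norm (A *v x) = sqrt ((norm (A *v x))\<^sup>2)" by simp
  also have "\<dots> \<le> sqrt (lambda_max ?M * (norm x)\<^sup>2)"
  proof (rule real_sqrt_le_mono)
    have "c1 * (norm x)\<^sup>2 \<le> lambda_max ?M * (norm x)\<^sup>2" using lmax by (rule mult_right_mono) simp
    then show "(norm (A *v x))\<^sup>2 \<le> lambda_max ?M * (norm x)\<^sup>2" using b1[of x] by linarith
  qed
  also have "\<dots> = sqrt (lambda_max ?M) * norm x" by (simp add: real_sqrt_mult)
  finally show "norm (A *v x) \<le> sqrt (lambda_max ?M) * norm x" .
  show "sqrt (lambda_min ?M) * norm x \<le> norm (A *v x)"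
  proof (cases "lambda_min ?M \<ge> 0")
    case False
    then have "sqrt (lambda_min ?M) * norm x \<le> 0"
      by (simp add: mult_nonpos_nonneg)
    then show ?thesis by (meson norm_ge_zero order_trans)
  next
    case True
    have "sqrt (lambda_min ?M) * norm x = sqrt (lambda_min ?M * (norm x)\<^sup>2)" by (simp add: real_sqrt_mult)
    also have "\<dots> \<le> sqrt ((norm (A *v x))\<^sup>2)"
    proof (rule real_sqrt_le_mono)
      have "lambda_min ?M * (norm x)\<^sup>2 \<le> c2 * (norm x)\<^sup>2" using lmin by (rule mult_right_mono) simp
      then show "lambda_min ?M * (norm x)\<^sup>2 \<le> (norm (A *v x))\<^sup>2" using b2[of x] by linarith
    qed
    also have "\<dots> = norm (A *v x)" by simp
    finally show ?thesis .
  qed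
qed



lemma support_max:
  fixes P :: "(real^'d) set"
  assumes "compact P" "P \<noteq> {}"
  obtains x where "x \<in> P" "\<forall>y\<in>P. inner y u \<le> inner x u" "support_fun P u = inner x u"
proof -
  have "continuous_on P (\<lambda>x. inner x u)" by (intro continuous_intros)
  then obtain x where x: "x \<in> P" "\<forall>y\<in>P. inner y u \<le> inner x u"
    using continuous_attains_sup[OF assms] by blast
  then have "support_fun P u = inner x u"
    unfolding support_fun_def by (intro cSup_eq_maximum) auto
  with x that show ?thesis by blast
qed

lemma maxset_face:
  fixes R :: "(real^'d) set"
  assumes "convex R"
  shows "{z\<in>R. \<forall>u\<in>S. \<forall>w\<in>R. inner w u \<le> inner z u} face_of R"
  unfolding face_of_def
proof (intro conjI ballI impI)
  let ?H = "{z\<in>R. \<forall>u\<in>S. \<forall>w\<in>R. inner w u \<le> inner z u}"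
  show "?H \<subseteq> R" by auto
  show "convex ?H"
    unfolding convex_def
  proof (intro ballI allI impI)
    fix x y and a b :: real assume x: "x \<in> ?H" and y: "y \<in> ?H" and ab: "0 \<le> a" "0 \<le> b" "a + b = 1"
    have "a *\<^sub>R x + b *\<^sub>R y \<in> R" using x y ab assms unfolding convex_def by blast
    moreover have "inner w u \<le> inner (a *\<^sub>R x + b *\<^sub>R y) u" if "u \<in> S" "w \<in> R" for u w
    proof -
      have "inner w u = a * inner w u + b * inner w u" using ab by (simp add: algebra_simps flip: distrib_right)
      also have "\<dots> \<le> a * inner x u + b * inner y u"
        using x y that ab by (intro add_mono mult_left_mono) auto
      finally show ?thesis by (simp add: inner_add_left)
    qed
    ultimately show "a *\<^sub>R x + b *\<^sub>R y \<in> ?H" by blast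
  qed
  fix a b x assume a: "a \<in> R" and b: "b \<in> R" and x: "x \<in> ?H" and xs: "x \<in> open_segment a b"
  obtain s where s: "0 < s" "s < 1" and xe: "x = (1 - s) *\<^sub>R a + s *\<^sub>R b"
    using xs by (auto simp: in_segment)
  have eq: "inner a u = inner x u \<and> inner b u = inner x u" if u: "u \<in> S" for u
  proof -
    have 1: "inner a u \<le> inner x u" "inner b u \<le> inner x u" using x a b u by auto
    have 2: "inner x u = (1 - s) * inner a u + s * inner b u" by (simp add: xe inner_add_left)
    show ?thesis
    proof
      show "inner a u = inner x u"
      proof (rule ccontr)
        assume "inner a u \<noteq> inner x u"
        then have "inner a u < inner x u" using 1 by simp
        then have "(1 - s) * inner a u < (1 - s) * inner x u" using s by simp
        moreover have "s * inner b u \<le> s * inner x u" using 1 s by simp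
        ultimately show False using 2 by (simp add: algebra_simps)
      qed
      show "inner b u = inner x u"
      proof (rule ccontr)
        assume "inner b u \<noteq> inner x u"
        then have "inner b u < inner x u" using 1 by simp
        then have "s * inner b u < s * inner x u" using s by simp
        moreover have "(1 - s) * inner a u \<le> (1 - s) * inner x u" using 1 s by simp
        ultimately show False using 2 by (simp add: algebra_simps)
      qed
    qed
  qed
  show "a \<in> ?H" using a x eq by auto
  show "b \<in> ?H" using b x eq by auto
qed

lemma deform_convex:
  fixes \<Delta> :: "(real^'d) set set" and v :: "'n::finite \<Rightarrow> real^'d"
  shows "convex (deformation_cone \<Delta> v)"
  unfolding convex_alt
proof (intro ballI allI impI)
  fix h1 h2 and t :: real
  assume h1: "h1 \<in> deformation_cone \<Delta> v" and h2: "h2 \<in> deformation_cone \<Delta> v" and t: "0 \<le> t \<and> t \<le> 1"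
  obtain P where P: "polytope P" "P \<noteq> {}" "\<forall>\<sigma>\<in>\<Delta>. \<exists>\<tau>\<in>normal_fan P. \<sigma> \<subseteq> \<tau>"
    and h1e: "h1 = (\<chi> i. support_fun P (v i))"
    using h1 unfolding deformation_cone_def by blast
  obtain Q where Q: "polytope Q" "Q \<noteq> {}" "\<forall>\<sigma>\<in>\<Delta>. \<exists>\<tau>\<in>normal_fan Q. \<sigma> \<subseteq> \<tau>"
    and h2e: "h2 = (\<chi> i. support_fun Q (v i))"
    using h2 unfolding deformation_cone_def by blast
  define f where "f p = (1 - t) *\<^sub>R fst p + t *\<^sub>R snd p" for p :: "(real^'d) \<times> (real^'d)"
  define R where "R = f ` (P \<times> Q)"
  have lin: "linear f" unfolding f_def linear_iff by (auto simp: algebra_simps)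
  have polyR: "polytope R" unfolding R_def by (intro polytope_linear_image lin polytope_Times P(1) Q(1))
  have convR: "convex R" using polyR polytope_imp_convex by blast
  have RneE: "R \<noteq> {}" using P(2) Q(2) by (auto simp: R_def)
  have Rmem: "(1 - t) *\<^sub>R a + t *\<^sub>R b \<in> R" if "a \<in> P" "b \<in> Q" for a b
    using that unfolding R_def f_def by (auto intro!: image_eqI[where x="(a, b)"])
  have Rcases: "\<exists>a\<in>P. \<exists>b\<in>Q. r = (1 - t) *\<^sub>R a + t *\<^sub>R b" if "r \<in> R" for r
    using that unfolding R_def f_def by force
  have sup: "support_fun R w = (1 - t) * support_fun P w + t * support_fun Q w" for w
  proof -
    obtain a where a: "a \<in> P" "\<forall>y\<in>P. inner y w \<le> inner a w" "support_fun P w = inner a w"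
      using support_max[OF polytope_imp_compact[OF P(1)] P(2)] by blast
    obtain b where b: "b \<in> Q" "\<forall>y\<in>Q. inner y w \<le> inner b w" "support_fun Q w = inner b w"
      using support_max[OF polytope_imp_compact[OF Q(1)] Q(2)] by blast
    have "Sup ((\<lambda>x. inner x w) ` R) = inner ((1 - t) *\<^sub>R a + t *\<^sub>R b) w"
    proof (rule cSup_eq_maximum)
      show "inner ((1 - t) *\<^sub>R a + t *\<^sub>R b) w \<in> (\<lambda>x. inner x w) ` R" using Rmem a b by blast
      fix z assume "z \<in> (\<lambda>x. inner x w) ` R"
      then obtain a' b' where ab': "a' \<in> P" "b' \<in> Q" "z = inner ((1 - t) *\<^sub>R a' + t *\<^sub>R b') w"
        using Rcases by blast
      have "(1 - t) * inner a' w + t * inner b' w \<le> (1 - t) * inner a w + t * inner b w"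
        using a b ab' t by (intro add_mono mult_left_mono) auto
      then show "z \<le> inner ((1 - t) *\<^sub>R a + t *\<^sub>R b) w" using ab' by (simp add: inner_add_left)
    qed
    then show ?thesis using a b unfolding support_fun_def by (simp add: inner_add_left)
  qed
  have fan: "\<exists>\<tau>\<in>normal_fan R. \<sigma> \<subseteq> \<tau>" if sig: "\<sigma> \<in> \<Delta>" for \<sigma>
  proof -
    have "\<exists>\<tau>\<in>normal_fan P. \<sigma> \<subseteq> \<tau>" using P(3) sig by (rule bspec)
    then obtain \<tau>1 where \<tau>1: "\<tau>1 \<in> normal_fan P" "\<sigma> \<subseteq> \<tau>1" by (elim bexE)
    have "\<exists>F. \<tau>1 = normal_cone P F \<and> F face_of P \<and> F \<noteq> {}"
      using \<tau>1(1) unfolding normal_fan_def by (simp only: mem_Collect_eq)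
    then obtain F where F0: "\<tau>1 = normal_cone P F" "F face_of P" "F \<noteq> {}"
      by (elim exE conjE)
    have F: "F face_of P" "F \<noteq> {}" "\<sigma> \<subseteq> normal_cone P F"
      using F0(2,3) \<tau>1(2) unfolding F0(1) by simp_all
    have "\<exists>\<tau>\<in>normal_fan Q. \<sigma> \<subseteq> \<tau>" using Q(3) sig by (rule bspec)
    then obtain \<tau>2 where \<tau>2: "\<tau>2 \<in> normal_fan Q" "\<sigma> \<subseteq> \<tau>2" by (elim bexE)
    have "\<exists>G. \<tau>2 = normal_cone Q G \<and> G face_of Q \<and> G \<noteq> {}"
      using \<tau>2(1) unfolding normal_fan_def by (simp only: mem_Collect_eq)
    then obtain G where G0: "\<tau>2 = normal_cone Q G" "G face_of Q" "G \<noteq> {}"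
      by (elim exE conjE)
    have G: "G face_of Q" "G \<noteq> {}" "\<sigma> \<subseteq> normal_cone Q G"
      using G0(2,3) \<tau>2(2) unfolding G0(1) by simp_all
    define H where "H = {z\<in>R. \<forall>u\<in>\<sigma>. \<forall>w\<in>R. inner w u \<le> inner z u}"
    have Hf: "H face_of R" unfolding H_def by (rule maxset_face[OF convR])
    obtain a where a: "a \<in> F" using F(2) by blast
    obtain b where b: "b \<in> G" using G(2) by blast
    have aP: "a \<in> P" using a F(1) face_of_imp_subset by blast
    have bQ: "b \<in> Q" using b G(1) face_of_imp_subset by blast
    have "(1 - t) *\<^sub>R a + t *\<^sub>R b \<in> H"
      unfolding H_def
    proof (intro CollectI conjI ballI)
      show "(1 - t) *\<^sub>R a + t *\<^sub>R b \<in> R" using Rmem aP bQ by blast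
      fix u w assume u: "u \<in> \<sigma>" and w: "w \<in> R"
      obtain a' b' where ab': "a' \<in> P" "b' \<in> Q" "w = (1 - t) *\<^sub>R a' + t *\<^sub>R b'"
        using Rcases w by blast
      have "inner a' u \<le> inner a u" using F(3) u ab' a unfolding normal_cone_def by blast
      moreover have "inner b' u \<le> inner b u" using G(3) u ab' b unfolding normal_cone_def by blast
      ultimately have "(1 - t) * inner a' u + t * inner b' u \<le> (1 - t) * inner a u + t * inner b u"
        using t by (intro add_mono mult_left_mono) auto
      then show "inner w u \<le> inner ((1 - t) *\<^sub>R a + t *\<^sub>R b) u" using ab' by (simp add: inner_add_left)
    qed
    then have Hne: "H \<noteq> {}" by blast
    have "\<sigma> \<subseteq> normal_cone R H" unfolding normal_cone_def H_def by auto
    moreover have "normal_cone R H \<in> normal_fan R" unfolding normal_fan_def using Hf Hne by blast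
    ultimately show ?thesis by blast
  qed
  have "(1 - t) *\<^sub>R h1 + t *\<^sub>R h2 = (\<chi> i. support_fun R (v i))"
    unfolding h1e h2e by (simp add: vec_eq_iff sup)
  then show "(1 - t) *\<^sub>R h1 + t *\<^sub>R h2 \<in> deformation_cone \<Delta> v"
    unfolding deformation_cone_def using polyR RneE fan by blast
qed

lemma vi_aux:
  fixes g N :: real
  assumes h: "\<And>\<tau>. 0 < \<tau> \<Longrightarrow> \<tau> \<le> 1 \<Longrightarrow> 2 * \<tau> * g \<le> \<tau>\<^sup>2 * N" and N: "N \<ge> 0"
  shows "g \<le> 0"
proof (rule ccontr)
  assume "\<not> g \<le> 0"
  then have g: "g > 0" by simp
  define \<tau> where "\<tau> = min 1 (g / (N + 1))"
  have tp: "\<tau> > 0" using g N by (simp add: \<tau>_def)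
  have t1: "\<tau> \<le> 1" by (simp add: \<tau>_def)
  have t2: "\<tau> \<le> g / (N + 1)" by (simp add: \<tau>_def)
  have "\<tau> * (2 * g) \<le> \<tau> * (\<tau> * N)" using h[OF tp t1] by (simp add: power2_eq_square algebra_simps)
  then have a: "2 * g \<le> \<tau> * N" using tp by simp
  have "\<tau> * N \<le> g / (N + 1) * N" using t2 N by (rule mult_right_mono)
  also have "\<dots> \<le> g" using g N by (simp add: field_simps)
  finally show False using a g by linarith
qed

theorem lemma4p6:
  fixes \<Delta> :: "(real^'d) set set"
    and v :: "'n::finite \<Rightarrow> real^'d"
    and U :: "real^'d^'m"
    and h0 hbar hhat :: "real^'n"
    and y y0 ybar yhat :: "real^'m"
  assumes simp: "simplicial_fan_with_rays \<Delta> v"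
    and poly: "polytopal_fan \<Delta>"
    and h0: "h0 \<in> deformation_cone \<Delta> v"
    and y0: "y0 = A_mat \<Delta> v U *v h0"
    and yhat_in: "yhat \<in> (\<lambda>h. A_mat \<Delta> v U *v h) ` deformation_cone \<Delta> v"
    and yhat_min: "\<forall>z \<in> (\<lambda>h. A_mat \<Delta> v U *v h) ` deformation_cone \<Delta> v. dist y yhat \<le> dist y z"
    and ybar_in: "ybar \<in> range (\<lambda>h. A_mat \<Delta> v U *v h)"
    and ybar_orth: "\<forall>z \<in> range (\<lambda>h. A_mat \<Delta> v U *v h). inner (y - ybar) z = 0"
    and hbar: "A_mat \<Delta> v U *v hbar = ybar"
    and hhat: "A_mat \<Delta> v U *v hhat = yhat"
  shows "norm (yhat - y0) \<le> norm (ybar - y0) \<and>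
         sqrt (lambda_min (transpose (A_mat \<Delta> v U) ** A_mat \<Delta> v U)) * norm (hhat - h0)
           \<le> sqrt (lambda_max (transpose (A_mat \<Delta> v U) ** A_mat \<Delta> v U)) * norm (hbar - h0)"
  proof -
  let ?A = "A_mat \<Delta> v U"
  let ?D = "deformation_cone \<Delta> v"
  let ?C = "(\<lambda>h. ?A *v h) ` ?D"
  have convC: "convex ?C" by (intro convex_linear_image matrix_vector_mul_linear deform_convex)
  have y0C: "y0 \<in> ?C" using h0 y0 by blast
  define d where "d = y0 - yhat"
  have vi: "inner (y - yhat) d \<le> 0"
  proof (rule vi_aux)
    show "(norm d)\<^sup>2 \<ge> 0" by simp
    fix \<tau> :: real assume t: "0 < \<tau>" "\<tau> \<le> 1"
    have "(1 - \<tau>) *\<^sub>R yhat + \<tau> *\<^sub>R y0 \<in> ?C"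
      by (rule convC[unfolded convex_alt, rule_format, OF yhat_in y0C]) (use t in simp)
    moreover have "(1 - \<tau>) *\<^sub>R yhat + \<tau> *\<^sub>R y0 = yhat + \<tau> *\<^sub>R d" by (simp add: d_def algebra_simps)
    ultimately have "dist y yhat \<le> dist y (yhat + \<tau> *\<^sub>R d)" using yhat_min by metis
    then have "norm (y - yhat) \<le> norm ((y - yhat) - \<tau> *\<^sub>R d)" by (simp add: dist_norm algebra_simps)
    then have "inner (y - yhat) (y - yhat) \<le> inner ((y - yhat) - \<tau> *\<^sub>R d) ((y - yhat) - \<tau> *\<^sub>R d)"
      by (simp add: norm_le)
    moreover have nd: "norm d * norm d = inner d d" by (metis power2_eq_square power2_norm_eq_inner)
    ultimately show "2 * \<tau> * inner (y - yhat) d \<le> \<tau>\<^sup>2 * (norm d)\<^sup>2"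
      by (simp add: nd inner_diff_left inner_diff_right power2_norm_eq_inner inner_commute power2_eq_square algebra_simps)
  qed
  have dA: "d = ?A *v (h0 - hhat)" by (simp add: d_def y0 hhat matrix_vector_mult_diff_distrib)
  have "inner (y - ybar) d = 0" using ybar_orth dA by blast
  then have vi2: "inner (ybar - yhat) d \<le> 0" using vi
    by (simp add: inner_diff_left)
  have "inner (yhat - y0) (yhat - y0) \<le> inner (ybar - y0) (ybar - y0)"
  proof -
    have e: "ybar - y0 = (ybar - yhat) - d" "yhat - y0 = - d" by (simp_all add: d_def)
    have q: "inner ((ybar - yhat) - d) ((ybar - yhat) - d) = inner (ybar - yhat) (ybar - yhat) - 2 * inner (ybar - yhat) d + inner d d"
      by (simp add: inner_diff_left inner_diff_right inner_commute)
    have ge: "inner (ybar - yhat) (ybar - yhat) \<ge> 0" by (rule inner_ge_zero)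
    have md: "inner (- d) (- d) = inner d d" by simp
    show ?thesis unfolding e q md using vi2 ge by linarith
  qed
  then have c1: "norm (yhat - y0) \<le> norm (ybar - y0)" by (simp add: norm_le)
  have n1: "norm (?A *v (hhat - h0)) = norm (yhat - y0)"
    by (simp add: hhat y0 matrix_vector_mult_diff_distrib)
  have n2: "norm (?A *v (hbar - h0)) = norm (ybar - y0)"
    by (simp add: hbar y0 matrix_vector_mult_diff_distrib)
  have "sqrt (lambda_min (transpose ?A ** ?A)) * norm (hhat - h0) \<le> norm (?A *v (hhat - h0))"
    by (rule rayleigh(1))
  also have "\<dots> \<le> norm (?A *v (hbar - h0))" using c1 n1 n2 by simp
  also have "\<dots> \<le> sqrt (lambda_max (transpose ?A ** ?A)) * norm (hbar - h0)"
    by (rule rayleigh(2))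
  finally show ?thesis using c1 by simp
qed

end
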